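(* For $1\le\sigma\le2$ and $t\ge 500$, $$|\zeta(\sigma+it)|<\log t-0.14.$$
   Context: $\zeta$ denotes the Riemann zeta function. *)

theory Defs
  imports "HOL-Analysis.Analysis"
begin

text \<open>For Re s > 1 it is the Dirichlet series; for
  0 < Re s \<le> 1, s \<noteq> 1, we use the standard analytic continuation
  zeta s = s/(s-1) - s * integral over [1,\<infinity>) of frac x * x^(-s-1).
  (The integral converges absolutely for Re s > 0.) Other values are irrelevant here.\<close>

definition riemann_zeta :: "complex \<Rightarrow> complex" where
  "riemann_zeta s =
     (if Re s > 1 then (\<Sum>n. 1 / (of_nat (Suc n)) powr s)
      else s / (s - 1) - s * integral {1..} (\<lambda>x::real. of_real (frac x) * (of_real x) powr (- s - 1)))"

end

theory Submission
  imports Defs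
begin


lemma powr_shift_c:
  fixes z a :: complex
  assumes "z \<noteq> 0"
  shows "z powr (a + 1) = z * z powr a"
  using assms by (simp add: powr_add powr_nat'[of z 1, simplified])

lemma powr_minus1_c:
  fixes z a :: complex
  assumes "z \<noteq> 0"
  shows "z powr (a - 1) = z powr a / z"
  using assms by (simp add: powr_diff powr_nat'[of z 1, simplified])

lemma powr_minus2_c:
  fixes z a :: complex
  assumes "z \<noteq> 0"
  shows "z powr (a - 2) = z powr a / z^2"
  using assms powr_diff[of z a 2] powr_nat'[of z 2] by simp

lemma Phi_alg:
  fixes A B z n s :: complex
  shows "((2 * n + (1 - 2 * z)) * s * A * 2 + (- s - 1) * B * ((z - n) * (n + 1 - z) * s) * 2) / 4
     - s * A * (n + 1 / 2 - z) = - ((z - n) * (n + 1 - z) * s * (s + 1) * B / 2)"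
  by (simp add: field_simps)

lemma Phi_deriv:
  fixes s z :: complex and n :: real
  assumes "z \<notin> \<real>\<^sub>\<le>\<^sub>0" "s \<noteq> 1"
  shows "((\<lambda>z. z powr (1-s)/(1-s) + (z - of_real n)*(of_real n + 1 - z)/2 * s * z powr (-s-1)
              + (of_real n + 1/2 - z) * z powr (-s))
          has_field_derivative (-((z - of_real n)*(of_real n + 1 - z)/2) * s * (s+1) * z powr (-s-2))) (at z)"
proof -
  have z0: "z \<noteq> 0" using assms by auto
  have s1: "1 - s \<noteq> 0" using assms by auto
  have p: "z powr (- 2 - s) = z powr (- s - 2)" by (rule arg_cong[where f="\<lambda>a. z powr a"]) simp
  show ?thesis
    using assms z0 s1
    by (auto intro!: derivative_eq_intros) (simp only: p Phi_alg)
qed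

lemma norm_ofreal_powr:
  fixes a :: complex and x :: real
  assumes "x > 0"
  shows "norm ((of_real x :: complex) powr a) = x powr Re a"
  using assms by (simp add: norm_powr_real_powr)

lemma trap_bound:
  fixes s :: complex and n :: real
  assumes n: "n \<ge> 1" and s: "Re s \<ge> 1" "s \<noteq> 1"
  shows "norm ((of_real (n+1) powr (1-s) - of_real n powr (1-s))/(1-s)
            - (of_real (n+1) powr (-s) + of_real n powr (-s))/2) \<le> norm s * norm (s+1) / (12 * n^3)"
proof -
  define F where "F = (\<lambda>z::complex. z powr (1-s)/(1-s) + (z - of_real n)*(of_real n + 1 - z)/2 * s * z powr (-s-1)
              + (of_real n + 1/2 - z) * z powr (-s))"
  define F' where "F' = (\<lambda>z::complex. -((z - of_real n)*(of_real n + 1 - z)/2) * s * (s+1) * z powr (-s-2))"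
  define B where "B = norm s * norm (s+1) / n^3"
  define \<phi> where "\<phi> = (\<lambda>x::real. B * ((x-n)^2/4 - (x-n)^3/6))"
  have B0: "B \<ge> 0" using n by (simp add: B_def)
  have dF: "((\<lambda>x. F (of_real x)) has_vector_derivative F' (of_real x)) (at x within S)" if "x > 0" for x S
  proof -
    have "complex_of_real x \<notin> \<real>\<^sub>\<le>\<^sub>0" using that by (auto simp: complex_nonpos_Reals_iff)
    from Phi_deriv[OF this s(2), of n] show ?thesis
      unfolding F_def F'_def by (rule has_vector_derivative_real_field)
  qed
  have "norm ((\<lambda>x. F (of_real x)) (n+1) - (\<lambda>x. F (of_real x)) n) \<le> \<phi> (n+1) - \<phi> n"
  proof (rule differentiable_bound_general[where f' = "\<lambda>x. F' (of_real x)" and \<phi>' = "\<lambda>x. B * ((x-n)*(n+1-x)/2)"])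
    show "n < n + 1" by simp
    show "continuous_on {n..n + 1} (\<lambda>x. F (complex_of_real x))"
      using n by (intro continuous_at_imp_continuous_on ballI has_vector_derivative_continuous[OF dF]) auto
    show "continuous_on {n..n + 1} \<phi>" unfolding \<phi>_def by (intro continuous_intros) auto
    show "((\<lambda>x. F (complex_of_real x)) has_vector_derivative F' (complex_of_real x)) (at x)"
      if "n < x" "x < n+1" for x using that n by (intro dF) auto
    show "(\<phi> has_vector_derivative B * ((x - n) * (n + 1 - x) / 2)) (at x)" for x
      unfolding \<phi>_def has_real_derivative_iff_has_vector_derivative[symmetric]
      by (auto intro!: derivative_eq_intros simp: field_simps power2_eq_square power3_eq_cube)
    show "norm (F' (complex_of_real x)) \<le> B * ((x - n) * (n + 1 - x) / 2)"
      if x: "n < x" "x < n+1" for x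
    proof -
      have x0: "x > 0" using x n by auto
      have K0: "(x - n) * (n + 1 - x) / 2 \<ge> 0" using x by auto
      have "norm (F' (complex_of_real x)) = ((x - n) * (n + 1 - x) / 2) * norm s * norm (s+1) * x powr (- Re s - 2)"
      proof -
        have a1: "cmod (complex_of_real x - complex_of_real n) = x - n"
          using x by (metis abs_of_pos diff_gt_0_iff_gt norm_of_real of_real_diff)
        have a2: "cmod (complex_of_real n + 1 - complex_of_real x) = n + 1 - x"
        proof -
          have "complex_of_real n + 1 - complex_of_real x = of_real (n + 1 - x)" by simp
          then show ?thesis using x by (metis abs_of_pos diff_gt_0_iff_gt norm_of_real)
        qed
        show ?thesis using x0 by (simp add: F'_def norm_mult norm_divide a1 a2 norm_ofreal_powr)
      qed
      also have "\<dots> \<le> ((x - n) * (n + 1 - x) / 2) * norm s * norm (s+1) * (1 / n^3)"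
      proof (intro mult_left_mono)
        have "x powr (- Re s - 2) \<le> x powr (-3)" using s x0 x n by (intro powr_mono) auto
        also have "\<dots> \<le> n powr (-3)" using x n by (intro powr_mono2') auto
        also have "\<dots> = 1 / n^3" using n by (simp add: powr_minus_divide powr_realpow)
        finally show "x powr (- Re s - 2) \<le> 1 / n^3" .
      qed (use K0 in auto)
      also have "\<dots> = B * ((x - n) * (n + 1 - x) / 2)" by (simp add: B_def mult_ac)
      finally show ?thesis .
    qed
  qed
  also have "\<phi> (n+1) - \<phi> n = B / 12" by (simp add: \<phi>_def)
  also have "(\<lambda>x. F (of_real x)) (n+1) - (\<lambda>x. F (of_real x)) n
     = (of_real (n+1) powr (1-s) - of_real n powr (1-s))/(1-s) - (of_real (n+1) powr (-s) + of_real n powr (-s))/2"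
  proof -
    have f1: "F (of_real (n+1)) = of_real (n+1) powr (1-s)/(1-s) - of_real (n+1) powr (-s)/2"
      unfolding F_def by (simp add: algebra_simps)
    have f0: "F (of_real n) = of_real n powr (1-s)/(1-s) + of_real n powr (-s)/2"
      unfolding F_def by (simp add: algebra_simps)
    show ?thesis by (simp only: f1 f0) (simp add: diff_divide_distrib algebra_simps)
  qed
  finally show ?thesis by (simp add: B_def)
qed


definition pw :: "nat \<Rightarrow> complex \<Rightarrow> complex" where "pw n a = of_nat n powr a"

definition Ez :: "complex \<Rightarrow> nat \<Rightarrow> complex" where
  "Ez s n = (pw (n+1) (1-s) - pw n (1-s))/(1-s) - (pw (n+1) (-s) + pw n (-s))/2"

lemma pw_1 [simp]: "pw 1 a = 1"
  by (simp add: pw_def)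

lemma pw_Suc0 [simp]: "pw (Suc 0) a = 1"
  by (simp add: pw_def)

lemma half_helper: "(C::real)/12 * (X/2) = C/24 * X"
  by simp

lemma Ez_bound:
  assumes "n \<ge> 1" "Re s \<ge> 1" "s \<noteq> 1"
  shows "norm (Ez s n) \<le> norm s * norm (s+1) / (12 * real n ^ 3)"
proof -
  have "real n \<ge> 1" using assms by simp
  from trap_bound[OF this assms(2,3)] show ?thesis
    by (simp add: Ez_def pw_def add_ac)
qed

lemma cube_le:
  fixes n :: real assumes "n \<ge> 1"
  shows "1 / n^3 \<le> (1/(n-1/2)^2 - 1/(n+1/2)^2)/2"
proof -
  have a: "(1/(n-1/2)^2 - 1/(n+1/2)^2)/2 = n / (n^2 - 1/4)^2"
  proof -
    have a0: "n - 1/2 > 0" "n + 1/2 > 0" using assms by auto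
    have h: "1/A - 1/B = (B - A)/(A*B)" if "A \<noteq> 0" "B \<noteq> 0" for A B :: real
      using that by (simp add: field_simps)
    have "1/(n-1/2)^2 - 1/(n+1/2)^2 = ((n+1/2)^2 - (n-1/2)^2) / ((n-1/2)*(n+1/2))^2"
      using a0 by (subst h) (auto simp: power_mult_distrib)
    also have "(n+1/2)^2 - (n-1/2)^2 = 2*n" by (simp add: power2_eq_square algebra_simps)
    also have "(n-1/2)*(n+1/2) = n^2 - 1/4" by (simp add: power2_eq_square algebra_simps)
    finally show ?thesis by simp
  qed
  have p: "n^2 - 1/4 > 0"
  proof -
    have "1 \<le> n^2" using assms by (simp add: one_le_power)
    then show ?thesis by simp
  qed
  have "(n^2 - 1/4)^2 \<le> (n^2)^2" using p by (intro power_mono) auto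
  then have "n / (n^2)^2 \<le> n / (n^2 - 1/4)^2"
    using p assms by (intro divide_left_mono) auto
  moreover have "n / (n^2)^2 = 1 / n^3" using assms by (simp add: field_simps power2_eq_square power3_eq_cube)
  ultimately show ?thesis using a by simp
qed

lemma tail_bound:
  fixes s :: complex and m :: nat
  assumes s: "Re s \<ge> 1" "s \<noteq> 1"
  shows "summable (\<lambda>k. Ez s (k+m+1))"
    and "norm (\<Sum>k. Ez s (k+m+1)) \<le> norm s * norm (s+1) / (24 * (real m + 1/2)^2)"
proof -
  define C where "C = norm s * norm (s+1)"
  define D where "D = (\<lambda>k::nat. 1 / (real k + real m + 1/2)^2)"
  have "D \<longlonglongrightarrow> 0" unfolding D_def
    by real_asymp
  from telescope_sums'[OF this] have "(\<lambda>k. D k - D (Suc k)) sums (D 0)" by simp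
  then have g: "(\<lambda>k. C/24 * (D k - D (Suc k))) sums (C/24 * D 0)" by (rule sums_mult)
  have le: "norm (Ez s (k+m+1)) \<le> C/24 * (D k - D (Suc k))" for k
  proof -
    have "norm (Ez s (k+m+1)) \<le> C / (12 * real (k+m+1) ^ 3)"
      using Ez_bound[of "k+m+1" s] s by (simp add: C_def)
    also have "\<dots> = C/12 * (1 / real (k+m+1) ^ 3)" by simp
    also have "\<dots> \<le> C/12 * ((1/(real (k+m+1)-1/2)^2 - 1/(real (k+m+1)+1/2)^2)/2)"
      by (intro mult_left_mono cube_le) (auto simp: C_def)
    also have "\<dots> = C/24 * (D k - D (Suc k))"
    proof -
      have e1: "real (k+m+1) - 1/2 = real k + real m + 1/2" by simp
      have e2: "real (k+m+1) + 1/2 = real (Suc k) + real m + 1/2" by simp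
      show ?thesis by (simp only: e1 e2 D_def half_helper)
    qed
    finally show ?thesis .
  qed
  have sn: "summable (\<lambda>k. norm (Ez s (k+m+1)))"
    by (rule summable_comparison_test[OF _ sums_summable[OF g]]) (use le in auto)
  then show "summable (\<lambda>k. Ez s (k+m+1))" by (rule summable_norm_cancel)
  have "norm (\<Sum>k. Ez s (k+m+1)) \<le> (\<Sum>k. norm (Ez s (k+m+1)))" by (rule summable_norm[OF sn])
  also have "\<dots> \<le> (\<Sum>k. C/24 * (D k - D (Suc k)))"
    by (rule suminf_le[OF le sn sums_summable[OF g]])
  also have "\<dots> = C/24 * D 0" using g by (simp add: sums_iff)
  finally show "norm (\<Sum>k. Ez s (k+m+1)) \<le> norm s * norm (s+1) / (24 * (real m + 1/2)^2)"
    by (simp add: C_def D_def)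
qed

lemma Ez_partial:
  "(\<Sum>k<M. Ez s (k+1)) = (pw (M+1) (1-s) - 1)/(1-s) - (\<Sum>k<M. pw (k+2) (-s)) - (1 - pw (M+1) (-s))/2"
proof (induction M)
  case 0 then show ?case by simp
next
  case (Suc M)
  have "(\<Sum>k<Suc M. Ez s (k+1)) = (\<Sum>k<M. Ez s (k+1)) + Ez s (M+1)" by simp
  also have "\<dots> = (pw (M+1) (1-s) - 1)/(1-s) - (\<Sum>k<M. pw (k+2) (-s)) - (1 - pw (M+1) (-s))/2 + Ez s (M+1)"
    by (simp only: Suc.IH)
  also have "\<dots> = (pw (Suc M+1) (1-s) - 1)/(1-s) - ((\<Sum>k<M. pw (k+2) (-s)) + pw (M+2) (-s)) - (1 - pw (Suc M+1) (-s))/2"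
    unfolding Ez_def by (simp add: diff_divide_distrib algebra_simps)
  finally show ?case by simp
qed


lemma H_deriv:
  fixes s z c :: complex
  assumes "z \<notin> \<real>\<^sub>\<le>\<^sub>0" "s \<noteq> 1" "s \<noteq> 0"
  shows "((\<lambda>z. z powr (1-s)/(1-s) + c * z powr (-s)/s) has_field_derivative ((z - c) * z powr (-s-1))) (at z)"
proof -
  have z0: "z \<noteq> 0" using assms by auto
  have s1: "1 - s \<noteq> 0" using assms by auto
  have e: "z powr (-s) = z * z powr (-s-1)"
  proof -
    have "z powr ((-s-1)+1) = z * z powr (-s-1)" by (rule powr_shift_c[OF z0])
    moreover have "(-s-1)+1 = -s" by simp
    ultimately show ?thesis by metis
  qed
  show ?thesis
    using assms z0 s1
    by (auto intro!: derivative_eq_intros) (simp add: e field_simps)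
qed


lemma pw_shift: "n > 0 \<Longrightarrow> pw n (1-s) = of_nat n * pw n (-s)"
proof -
  assume n: "n > 0"
  have "(of_nat n :: complex) powr (-s+1) = of_nat n * of_nat n powr (-s)"
    by (rule powr_shift_c) (use n in simp)
  moreover have "-s+1 = 1-s" by simp
  ultimately show ?thesis unfolding pw_def by metis
qed

definition zf :: "complex \<Rightarrow> real \<Rightarrow> complex" where
  "zf s x = of_real (frac x) * (of_real x) powr (- s - 1)"

lemma piece:
  fixes s :: complex and n :: nat
  assumes n: "n \<ge> 1" and s: "s \<noteq> 1" "s \<noteq> 0"
  shows "(zf s has_integral (Ez s n + (pw n (-s) - pw (n+1) (-s))/2)/s) {real n..real n + 1}"
proof -
  define H where "H = (\<lambda>z::complex. z powr (1-s)/(1-s) + of_nat n * z powr (-s)/s)"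
  have "((\<lambda>x. (of_real x - of_nat n) * of_real x powr (-s-1)) has_integral
          (H (of_real (real n + 1)) - H (of_real (real n)))) {real n..real n + 1}"
  proof (rule fundamental_theorem_of_calculus)
    show "real n \<le> real n + 1" by simp
    fix x assume x: "x \<in> {real n..real n + 1}"
    then have "complex_of_real x \<notin> \<real>\<^sub>\<le>\<^sub>0" using n by (auto simp: complex_nonpos_Reals_iff)
    from H_deriv[OF this s, of "of_nat n"]
    show "((\<lambda>x. H (of_real x)) has_vector_derivative (of_real x - of_nat n) * of_real x powr (-s-1))
            (at x within {real n..real n + 1})"
      unfolding H_def by (rule has_vector_derivative_real_field)
  qed
  then have I: "((\<lambda>x. (of_real x - of_nat n) * of_real x powr (-s-1)) has_integral
          (Ez s n + (pw n (-s) - pw (n+1) (-s))/2)/s) {real n..real n + 1}"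
  proof -
    have a1: "pw (n+1) (1-s) = of_nat (n+1) * pw (n+1) (-s)" by (rule pw_shift) simp
    have a0: "pw n (1-s) = of_nat n * pw n (-s)" by (rule pw_shift) (use n in simp)
    have "H (of_real (real n + 1)) - H (of_real (real n))
       = (pw (n+1) (1-s) - pw n (1-s))/(1-s) + of_nat n * (pw (n+1) (-s) - pw n (-s))/s"
      unfolding H_def pw_def by (simp add: diff_divide_distrib algebra_simps)
    also have "\<dots> = (Ez s n + (pw n (-s) - pw (n+1) (-s))/2)/s"
      unfolding Ez_def a1 a0 using s
      by (simp add: field_simps) (simp add: algebra_simps)?
    finally show ?thesis using \<open>(_ has_integral _) _\<close> by simp
  qed
  show ?thesis
  proof (rule has_integral_spike_finite[OF _ _ I])
    show "finite {real n + 1}" by simp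
    fix x assume x: "x \<in> {real n..real n + 1} - {real n + 1}"
    then have "floor x = int n" by (simp add: floor_eq_iff)
    then have "frac x = x - real n" by (simp add: frac_def)
    then show "zf s x = (of_real x - of_nat n) * of_real x powr (-s-1)"
      by (simp add: zf_def)
  qed
qed


lemma pw_lim: "Re a < 0 \<Longrightarrow> (\<lambda>M. pw (M+1) a) \<longlonglongrightarrow> 0"
  unfolding pw_def
  by (rule tendsto_neg_powr_complex_of_nat) (auto intro: filterlim_subseq simp: strict_mono_def)

lemma Ez_summable: "Re s \<ge> 1 \<Longrightarrow> s \<noteq> 1 \<Longrightarrow> summable (\<lambda>k. Ez s (k+1))"
  using tail_bound(1)[where s=s and m=0] by simp

lemma dirichlet_case:
  assumes s: "Re s > 1"
  shows "(\<lambda>n. 1 / (of_nat (Suc n)) powr s) sums (s/(s-1) - 1/2 - (\<Sum>k. Ez s (k+1)))"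
proof -
  have s1: "s \<noteq> 1" using s by auto
  have sm: "summable (\<lambda>k. Ez s (k+1))" using s s1 by (intro Ez_summable) auto
  have part: "(\<Sum>n<Suc M. 1 / (of_nat (Suc n)) powr s) =
     1 + ((pw (M+1) (1-s) - 1)/(1-s) - (1 - pw (M+1) (-s))/2 - (\<Sum>k<M. Ez s (k+1)))" for M
  proof -
    have "(\<Sum>n<Suc M. 1 / (of_nat (Suc n)) powr s) = 1 + (\<Sum>k<M. pw (k+2) (-s))"
      by (subst sum.lessThan_Suc_shift) (simp add: pw_def powr_minus_divide)
    also have "(\<Sum>k<M. pw (k+2) (-s)) = (pw (M+1) (1-s) - 1)/(1-s) - (1 - pw (M+1) (-s))/2 - (\<Sum>k<M. Ez s (k+1))"
      using Ez_partial[where M=M and s=s] by (simp add: algebra_simps)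
    finally show ?thesis .
  qed
  have "(\<lambda>M. 1 + ((pw (M+1) (1-s) - 1)/(1-s) - (1 - pw (M+1) (-s))/2 - (\<Sum>k<M. Ez s (k+1))))
        \<longlonglongrightarrow> 1 + ((0 - 1)/(1-s) - (1 - 0)/2 - (\<Sum>k. Ez s (k+1)))"
    using s by (intro tendsto_intros pw_lim summable_LIMSEQ sm) auto
  also have "1 + ((0 - 1)/(1-s) - (1 - 0)/2 - (\<Sum>k. Ez s (k+1))) = s/(s-1) - 1/2 - (\<Sum>k. Ez s (k+1))"
    using s1 by (simp add: field_simps)
  finally have "(\<lambda>M. (\<Sum>n<Suc M. 1 / (of_nat (Suc n)) powr s)) \<longlonglongrightarrow> s/(s-1) - 1/2 - (\<Sum>k. Ez s (k+1))"
    by (simp only: part)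
  then show ?thesis unfolding sums_def by (rule LIMSEQ_imp_Suc)
qed

lemma integral_case:
  assumes s: "Re s \<ge> 1" "s \<noteq> 1"
  shows "integral {1..} (zf s) = ((\<Sum>k. Ez s (k+1)) + 1/2)/s"
proof -
  have s0: "s \<noteq> 0" using s by auto
  define Y where "Y = (\<lambda>k. ((\<Sum>j<k. Ez s (j+1)) + (1 - pw (k+1) (-s))/2)/s)"
  have IK: "(zf s has_integral Y k) {1..real k + 1}" for k
  proof (induction k)
    case 0
    then show ?case by (simp add: Y_def has_integral_refl)
  next
    case (Suc k)
    have p: "(zf s has_integral (Ez s (k+1) + (pw (k+1) (-s) - pw (k+1+1) (-s))/2)/s) {real k + 1..real k + 1 + 1}"
      using piece[of "k+1" s] s s0 by (simp add: add.commute)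
    have "(zf s has_integral (Y k + (Ez s (k+1) + (pw (k+1) (-s) - pw (k+1+1) (-s))/2)/s)) {1..real k + 1 + 1}"
      by (rule has_integral_combine[OF _ _ Suc.IH p]) auto
    moreover have "Y k + (Ez s (k+1) + (pw (k+1) (-s) - pw (k+1+1) (-s))/2)/s = Y (Suc k)"
      unfolding Y_def using s0 by (simp add: field_simps) (simp add: algebra_simps)?
    ultimately show ?case by (simp add: add_ac)
  qed
  define f where "f = (\<lambda>k x. if x \<in> {1..real k + 1} then zf s x else 0)"
  have fk: "(f k has_integral Y k) {1..}" for k
    unfolding f_def by (subst has_integral_restrict) (use IK in auto)
  have h: "(\<lambda>x::real. x powr (-2)) integrable_on {1..}"
    using has_integral_powr_to_inf[of "-2" 1] by (auto simp: integrable_on_def)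
  have bound: "\<forall>x\<in>{1..}. norm (f k x) \<le> x powr (-2)" for k
  proof
    fix x :: real assume x: "x \<in> {1..}"
    then have x1: "x \<ge> 1" by simp
    have "norm (zf s x) = frac x * x powr (- Re s - 1)"
      using x1 by (simp add: zf_def norm_mult norm_ofreal_powr frac_ge_0)
    also have "\<dots> \<le> 1 * x powr (-2)"
    proof (intro mult_mono)
      show "frac x \<le> 1" using frac_lt_1[of x] by simp
      show "x powr (- Re s - 1) \<le> x powr (-2)" using x1 s by (intro powr_mono) auto
    qed (auto simp: frac_ge_0)
    finally show "norm (f k x) \<le> x powr (-2)" by (simp add: f_def)
  qed
  have conv: "\<forall>x\<in>{1..}. (\<lambda>k. f k x) \<longlonglongrightarrow> zf s x"
  proof
    fix x :: real assume x: "x \<in> {1..}"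
    show "(\<lambda>k. f k x) \<longlonglongrightarrow> zf s x"
    proof (rule tendsto_eventually)
      obtain K :: nat where K: "x \<le> real K" using real_arch_simple by blast
      show "\<forall>\<^sub>F k in sequentially. f k x = zf s x"
        using x K unfolding eventually_sequentially f_def
        by (intro exI[of _ K]) auto
    qed
  qed
  have Ylim: "Y \<longlonglongrightarrow> ((\<Sum>k. Ez s (k+1)) + (1 - 0)/2)/s"
    unfolding Y_def using s
    by (intro tendsto_intros summable_LIMSEQ Ez_summable pw_lim) auto
  have "(zf s has_integral ((\<Sum>k. Ez s (k+1)) + (1 - 0)/2)/s) {1..}"
    by (rule has_integral_dominated_convergence[OF fk h bound conv Ylim])
  then show ?thesis by (simp add: integral_unique)
qed



lemma gamma_upper: "(euler_mascheroni :: real) < 0.5796"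
proof -
  have "ln (real (Suc 15)) = 4 * ln 2"
  proof -
    have "real (Suc 15) = 2 ^ 4" by simp
    then have "ln (real (Suc 15)) = ln ((2::real) ^ 4)" by simp
    also have "\<dots> = real 4 * ln 2" by (rule ln_realpow)
    finally show ?thesis by simp
  qed
  moreover from ln_approx_bounds[of 2 3] have "ln (2::real) \<ge> 0.693"
    by (simp add: eval_nat_numeral)
  ultimately have l: "ln (real (Suc 15)) \<ge> 4 * 0.693" by simp
  have "euler_mascheroni \<le> harm 15 - ln (real (Suc 15)) + inverse (of_nat (2*15))"
    using euler_mascheroni_bounds[of 15] by simp
  also have "\<dots> \<le> harm 15 - 4 * 0.693 + inverse (of_nat (2*15))" using l by simp
  also have "\<dots> < 0.5796" by (simp add: harm_expand)
  finally show ?thesis .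
qed

lemma ln72: "ln (7/2 :: real) > 1.2523"
proof -
  from ln_approx_bounds[of "7/2" 6] show ?thesis
    by (simp add: eval_nat_numeral)
qed


lemma norm_pw: "n > 0 \<Longrightarrow> norm (pw n a) = real n powr Re a"
  unfolding pw_def by (subst norm_powr_real_powr) auto

lemma zeta_alg:
  fixes s P Q X R Y :: complex
  assumes "s \<noteq> 1" "Y = 1 + X - Q"
  shows "s/(s-1) - 1/2 - (R + ((P - 1)/(1-s) - X - (1 - Q)/2)) = (Y + Q/2) + P/(s-1) - R"
proof -
  have n: "s - 1 \<noteq> 0" using assms by auto
  have d: "(P - 1)/(1-s) = 1/(s-1) - P/(s-1)"
  proof -
    have "1 - s = -(s-1)" by simp
    then have "(P - 1)/(1-s) = -((P-1)/(s-1))" by (simp only: divide_minus_right)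
    also have "\<dots> = 1/(s-1) - P/(s-1)" by (simp add: diff_divide_distrib)
    finally show ?thesis .
  qed
  have e: "s/(s-1) = 1 + 1/(s-1)" using n by (simp add: field_simps)
  show ?thesis unfolding d e assms(2) by (simp add: diff_divide_distrib algebra_simps)
qed

lemma zeta_formula:
  assumes s: "Re s \<ge> 1" "s \<noteq> 1"
  shows "riemann_zeta s = s/(s-1) - 1/2 - (\<Sum>k. Ez s (k+1))"
proof (cases "Re s > 1")
  case True
  then show ?thesis unfolding riemann_zeta_def using dirichlet_case[OF True]
    by (simp add: sums_iff)
next
  case False
  have s0: "s \<noteq> 0" using s by auto
  have eq: "(\<lambda>x::real. of_real (frac x) * (of_real x) powr (- s - 1)) = zf s"
    by (simp add: zf_def fun_eq_iff)
  show ?thesis unfolding riemann_zeta_def using False integral_case[OF s] s0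
    by (simp add: eq field_simps)
qed

theorem proposition7:
  fixes \<sigma> t :: real
  assumes "1 \<le> \<sigma>" and "\<sigma> \<le> 2" and "t \<ge> 500"
  shows "norm (riemann_zeta (Complex \<sigma> t)) < ln t - 0.14"
proof -
  define s where "s = Complex \<sigma> t"
  have Res: "Re s = \<sigma>" and Ims: "Im s = t" by (simp_all add: s_def)
  have s1: "s \<noteq> 1" using assms Ims by auto
  have sR: "Re s \<ge> 1" using assms Res by simp
  define N where "N = nat \<lfloor>2*t/7\<rfloor>"
  have N1: "real N \<le> 2*t/7" and N2: "real N > 2*t/7 - 1" using assms
    by (simp_all add: N_def) linarith+
  have N142: "N \<ge> 142" using N2 assms by linarith
  define m where "m = N - 1"
  have mN: "m + 1 = N" using N142 by (simp add: m_def)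
  have m1: "m \<ge> 1" using N142 by (simp add: m_def)
  define R where "R = (\<Sum>k. Ez s (k+m+1))"
  define P where "P = pw (m+1) (1-s)"
  define Q where "Q = pw (m+1) (-s)"
  define X where "X = (\<Sum>k<m. pw (k+2) (-s))"
  define Y where "Y = (\<Sum>k<m. pw (k+1) (-s))"
  have sm: "summable (\<lambda>k. Ez s (k+1))" using sR s1 by (rule Ez_summable)
  have split: "(\<Sum>k. Ez s (k+1)) = R + (\<Sum>k<m. Ez s (k+1))"
    using suminf_split_initial_segment[OF sm, of m] by (simp add: R_def add_ac)
  have YX: "Y = 1 + X - Q"
  proof -
    have "(\<Sum>k<Suc m. pw (k+1) (-s)) = 1 + X"
      by (subst sum.lessThan_Suc_shift) (simp add: X_def)
    moreover have "(\<Sum>k<Suc m. pw (k+1) (-s)) = Y + Q" by (simp add: Y_def Q_def)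
    ultimately show ?thesis by (simp add: algebra_simps)
  qed
  have zeq: "riemann_zeta s = (Y + Q/2) + P/(s-1) - R"
    unfolding zeta_formula[OF sR s1] split Ez_partial P_def[symmetric] Q_def[symmetric] X_def[symmetric]
    by (rule zeta_alg[OF s1 YX])
  have nY: "norm (Y + Q/2) \<le> harm m + 1 / (2 * real (m+1))"
  proof -
    have "norm Y \<le> (\<Sum>k<m. norm (pw (k+1) (-s)))" unfolding Y_def by (rule norm_sum)
    also have "\<dots> \<le> (\<Sum>k<m. inverse (of_nat (Suc k)))"
    proof (rule sum_mono)
      fix k assume "k \<in> {..<m}"
      have "norm (pw (k+1) (-s)) = real (k+1) powr (-\<sigma>)" by (simp add: norm_pw Res)
      also have "\<dots> \<le> real (k+1) powr (-1)" using assms by (intro powr_mono) auto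
      also have "\<dots> = inverse (of_nat (Suc k))" by (simp add: powr_minus)
      finally show "norm (pw (k+1) (-s)) \<le> inverse (of_nat (Suc k))" .
    qed
    also have "\<dots> = harm m" by (simp add: harm_altdef)
    finally have a: "norm Y \<le> harm m" .
    have "norm Q = real (m+1) powr (-\<sigma>)" by (simp add: Q_def norm_pw Res)
    also have "\<dots> \<le> real (m+1) powr (-1)" using assms by (intro powr_mono) auto
    also have "\<dots> = 1 / real (m+1)" by (simp add: powr_minus divide_inverse)
    finally have b0: "norm Q \<le> 1 / real (m+1)" .
    have q1: "norm (Q/2) = norm Q / 2" by (simp add: norm_divide)
    have q2: "1 / (2 * real (m+1)) = (1 / real (m+1)) / 2" by simp
    have b: "norm (Q/2) \<le> 1 / (2 * real (m+1))"
      unfolding q1 q2 by (rule divide_right_mono[OF b0]) simp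
    show ?thesis using norm_triangle_ineq[of Y "Q/2"] a b by linarith
  qed
  have harmb: "harm m + 1 / (2 * real (m+1)) \<le> euler_mascheroni + ln (real (m+1))"
  proof -
    have "euler_mascheroni \<ge> harm (Suc (m-1)) - ln (real_of_nat (m - 1 + 2)) + 1/real_of_nat (2 * (m - 1 + 2))"
      by (rule euler_mascheroni_lower)
    moreover have "Suc (m-1) = m" "m - 1 + 2 = m + 1" using m1 by auto
    ultimately show ?thesis by simp
  qed
  have nP: "norm (P/(s-1)) \<le> 1/t"
  proof -
    have "norm P = real (m+1) powr (1-\<sigma>)" by (simp add: P_def norm_pw Res)
    also have "\<dots> \<le> real (m+1) powr 0" using assms by (intro powr_mono) auto
    also have "\<dots> = 1" by simp
    finally have a: "norm P \<le> 1" .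
    have b: "norm (s - 1) \<ge> t" using abs_Im_le_cmod[of "s-1"] Ims by simp
    have "norm (P/(s-1)) = norm P / norm (s-1)" by (simp add: norm_divide)
    also have "\<dots> \<le> 1 / t" using a b assms by (intro frac_le) auto
    finally show ?thesis .
  qed
  have nR: "norm R \<le> (t^2 + 9) / (24 * (real m + 1/2)^2)"
  proof -
    have "norm R \<le> norm s * norm (s+1) / (24 * (real m + 1/2)^2)"
      unfolding R_def by (rule tail_bound(2)[OF sR s1])
    also have "\<dots> \<le> (t^2 + 9) / (24 * (real m + 1/2)^2)"
    proof (intro divide_right_mono)
      have a: "(norm s)^2 = \<sigma>^2 + t^2" by (simp add: s_def cmod_def)
      have b: "(norm (s+1))^2 = (\<sigma>+1)^2 + t^2" by (simp add: s_def cmod_def)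
      have "norm s * norm (s+1) \<le> ((norm s)^2 + (norm (s+1))^2)/2"
        using sum_squares_ge_zero[of "norm s - norm (s+1)" 0]
        by (simp add: power2_eq_square algebra_simps)
      also have "\<dots> = (\<sigma>^2 + (\<sigma>+1)^2)/2 + t^2" by (simp add: a b)
      also have "\<dots> \<le> t^2 + 9"
      proof -
        have "\<sigma>^2 \<le> 2^2" using assms by (intro power_mono) auto
        moreover have "(\<sigma>+1)^2 \<le> 3^2" using assms by (intro power_mono) auto
        ultimately show ?thesis by simp
      qed
      finally show "norm s * norm (s+1) \<le> t^2 + 9" .
    qed simp
    finally show ?thesis .
  qed
  have rN: "real N = real m + 1" using mN by (metis of_nat_Suc Suc_eq_plus1 add.commute)
  have u0: "real m + 1/2 \<ge> 141" using N142 rN by linarith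
  have tu: "t \<le> 7 * (real m + 2) / 2" using N2 rN by (simp add: field_simps)
  have tail_num: "(t^2 + 9) / (24 * (real m + 1/2)^2) \<le> 0.522"
  proof -
    define u where "u = real m + 1/2"
    have u: "u \<ge> 141" using u0 by (simp add: u_def)
    have "t^2 \<le> (7 * (u + 3/2) / 2)^2" using tu assms by (intro power_mono) (auto simp: u_def)
    also have "\<dots> = 49/4 * u^2 + 147/4 * u + 441/16" by (simp add: power2_eq_square algebra_simps)
    finally have t2: "t^2 \<le> 49/4 * u^2 + 147/4 * u + 441/16" .
    have "u * (0.278 * u - 36.75) \<ge> 141 * 2.448"
      using u by (intro mult_mono) auto
    then have "0.278 * u^2 - 36.75 * u \<ge> 141 * 2.448" by (simp add: power2_eq_square algebra_simps)
    then have "t^2 + 9 \<le> 0.522 * (24 * u^2)" using t2 by simp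
    moreover have "24 * u^2 > 0" using u by simp
    ultimately show ?thesis by (simp add: u_def pos_divide_le_eq)
  qed
  have lnN: "ln (real N) \<le> ln t - ln (7/2)"
  proof -
    have "ln (real N) + ln (7/2) = ln (real N * (7/2))" using N142 by (subst ln_mult) auto
    also have "\<dots> \<le> ln t" using N1 N142 by (subst ln_le_cancel_iff) auto
    finally show ?thesis by simp
  qed
  have "norm (riemann_zeta s) \<le> norm (Y + Q/2) + norm (P/(s-1)) + norm R"
    unfolding zeq by (rule order_trans[OF norm_triangle_ineq4]) (simp add: norm_triangle_ineq)
  also have "\<dots> \<le> (euler_mascheroni + ln (real N)) + 1/t + 0.522"
  proof -
    have "ln (real (m+1)) = ln (real N)" using mN by simp
    then show ?thesis using nY harmb nP nR tail_num by linarith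
  qed
  also have "\<dots> < ln t - 0.14"
  proof -
    have "1/t \<le> 1/500" using assms by (intro divide_left_mono) auto
    then show ?thesis using gamma_upper ln72 lnN by simp
  qed
  finally show ?thesis by (simp add: s_def)
qed

end
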